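(* Let $G$ be a triangle-free graph and let $H_G$ be the graph with $V(H_G)=V(G)\cup\{a,b,c,d\}$ (four new vertices) and $E(H_G)=E(G)\cup\{ab,cd\}\cup E'$, where $E'=\{bv: v\in V(G)\}\cup\{cv: v\in V(G)\}$. Then there exists a line geodetic set $Q$ of $H_G$ of minimum cardinality such that $Q\cap E'=\emptyset$.
   Context: All graphs are finite, simple and undirected. The line graph $L(G)$ has vertex set $E(G)$, two edges adjacent iff they share an endpoint. For a graph $H$, a set $S\subseteq E(H)$ is a line geodetic set of $H$ if every edge of $E(H)\setminus S$ lies on some shortest path in $L(H)$ between two edges of $S$; equivalently, $S$ is a geodetic set of $L(H)$, where a set $T$ of vertices of a graph $F$ is geodetic if every vertex of $F$ lies on some shortest path between two vertices of $T$. *)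

theory Defs
  imports Main
begin

definition simple_graph :: "'a set \<Rightarrow> 'a set set \<Rightarrow> bool" where
  "simple_graph V E \<longleftrightarrow> finite V \<and>
     E \<subseteq> {{u, v} | u v. u \<in> V \<and> v \<in> V \<and> u \<noteq> v}"

definition triangle_free :: "'a set set \<Rightarrow> bool" where
  "triangle_free E \<longleftrightarrow> \<not> (\<exists>u v w. {u, v} \<in> E \<and> {v, w} \<in> E \<and> {u, w} \<in> E)"

definition walk :: "('v \<Rightarrow> 'v \<Rightarrow> bool) \<Rightarrow> 'v set \<Rightarrow> 'v list \<Rightarrow> bool" where
  "walk adj V p \<longleftrightarrow> p \<noteq> [] \<and> set p \<subseteq> V \<and>
     (\<forall>i. Suc i < length p \<longrightarrow> adj (p ! i) (p ! Suc i))"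

definition shortest_path :: "('v \<Rightarrow> 'v \<Rightarrow> bool) \<Rightarrow> 'v set \<Rightarrow> 'v \<Rightarrow> 'v \<Rightarrow> 'v list \<Rightarrow> bool" where
  "shortest_path adj V u v p \<longleftrightarrow> walk adj V p \<and> hd p = u \<and> last p = v \<and>
     (\<forall>q. walk adj V q \<and> hd q = u \<and> last q = v \<longrightarrow> length p \<le> length q)"

definition geodetic_set :: "('v \<Rightarrow> 'v \<Rightarrow> bool) \<Rightarrow> 'v set \<Rightarrow> 'v set \<Rightarrow> bool" where
  "geodetic_set adj V T \<longleftrightarrow> T \<subseteq> V \<and>
     (\<forall>x\<in>V. \<exists>u\<in>T. \<exists>v\<in>T. \<exists>p. shortest_path adj V u v p \<and> x \<in> set p)"

definition line_adj :: "'a set \<Rightarrow> 'a set \<Rightarrow> bool" where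
  "line_adj e f \<longleftrightarrow> e \<noteq> f \<and> e \<inter> f \<noteq> {}"

definition line_geodetic_set :: "'a set set \<Rightarrow> 'a set set \<Rightarrow> bool" where
  "line_geodetic_set E S \<longleftrightarrow> geodetic_set line_adj E S"

definition Eprime :: "'a set \<Rightarrow> 'a \<Rightarrow> 'a \<Rightarrow> 'a set set" where
  "Eprime V b c = {{b, v} | v. v \<in> V} \<union> {{c, v} | v. v \<in> V}"

definition HG_vertices :: "'a set \<Rightarrow> 'a \<Rightarrow> 'a \<Rightarrow> 'a \<Rightarrow> 'a \<Rightarrow> 'a set" where
  "HG_vertices V a b c d = V \<union> {a, b, c, d}"

definition HG_edges :: "'a set set \<Rightarrow> 'a set \<Rightarrow> 'a \<Rightarrow> 'a \<Rightarrow> 'a \<Rightarrow> 'a \<Rightarrow> 'a set set" where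
  "HG_edges E V a b c d = E \<union> {{a, b}, {c, d}} \<union> Eprime V b c"

end

theory Submission imports Defs begin

lemma succ_nth: "(\<forall>i. Suc i < length p \<longrightarrow> adj (p!i) (p!Suc i)) \<longleftrightarrow> successively adj p"
proof (induction adj p rule: successively.induct)
  case (3 P x y xs)
  have "(\<forall>i. Suc i < length (x#y#xs) \<longrightarrow> P ((x#y#xs)!i) ((x#y#xs)!Suc i)) \<longleftrightarrow>
        P x y \<and> (\<forall>i. Suc i < length (y#xs) \<longrightarrow> P ((y#xs)!i) ((y#xs)!Suc i))"
    (is "?L \<longleftrightarrow> ?R")
  proof
    assume ?L then show ?R by (metis Suc_less_eq length_Cons nth_Cons_Suc zero_less_Suc nth_Cons_0)
  next
    assume R: ?R show ?L
    proof (intro allI impI)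
      fix i assume "Suc i < length (x#y#xs)"
      then show "P ((x#y#xs)!i) ((x#y#xs)!Suc i)" using R by (cases i) auto
    qed
  qed
  then show ?case using 3 by simp
qed auto

lemma walk_alt: "walk adj V p \<longleftrightarrow> p \<noteq> [] \<and> set p \<subseteq> V \<and> successively adj p"
  unfolding walk_def succ_nth ..

lemma sp_single: "x \<in> V \<Longrightarrow> shortest_path adj V x x [x]"
  unfolding shortest_path_def walk_alt by (auto simp: Suc_le_eq)

lemma sp_no_shortcut:
  assumes "shortest_path adj V u v (xs @ w1 # m # w2 # ys)"
  shows "w1 \<noteq> w2 \<and> \<not> adj w1 w2"
proof -
  have w: "walk adj V (xs @ w1 # m # w2 # ys)" and h: "hd (xs @ w1 # m # w2 # ys) = u"
    and l: "last (xs @ w1 # m # w2 # ys) = v"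
    and mn: "\<And>q. walk adj V q \<Longrightarrow> hd q = u \<Longrightarrow> last q = v \<Longrightarrow> length (xs @ w1 # m # w2 # ys) \<le> length q"
    using assms unfolding shortest_path_def by auto
  show ?thesis
  proof (rule ccontr)
    assume "\<not> ?thesis"
    then consider "w1 = w2" | "adj w1 w2" by blast
    then show False
    proof cases
      case 1
      let ?q = "xs @ w1 # ys"
      have "walk adj V ?q" using w 1 unfolding walk_alt
        by (auto simp: successively_append_iff successively_Cons)
      moreover have "hd ?q = u" using h by (cases xs) auto
      moreover have "last ?q = v" using l 1 by (cases ys) auto
      ultimately show False using mn[of ?q] by simp
    next
      case 2
      let ?q = "xs @ w1 # w2 # ys"
      have "walk adj V ?q" using w 2 unfolding walk_alt
        by (auto simp: successively_append_iff successively_Cons)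
      moreover have "hd ?q = u" using h by (cases xs) auto
      moreover have "last ?q = v" using l by (cases ys) auto
      ultimately show False using mn[of ?q] by simp
    qed
  qed
qed

lemma sp_three:
  assumes "walk adj V [x,y,z]" "x \<noteq> z" "\<not> adj x z"
  shows "shortest_path adj V x z [x,y,z]"
  unfolding shortest_path_def
proof (intro conjI allI impI)
  fix q assume q: "walk adj V q \<and> hd q = x \<and> last q = z"
  show "length [x,y,z] \<le> length q"
  proof (rule ccontr)
    assume "\<not> ?thesis"
    then have "length q \<le> 2" by simp
    moreover have "q \<noteq> []" using q by (simp add: walk_def)
    ultimately obtain w1 w2 where "q = [w1] \<or> q = [w1,w2]"
      by (cases q; cases "tl q"; auto)
    then show False using q assms(2,3) by (auto simp: walk_alt)
  qed
qed (use assms in auto)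

lemma line_adj_sym: "line_adj e f = line_adj f e"
  unfolding line_adj_def by blast

lemma sp_basic: "shortest_path adj V u v p \<Longrightarrow> walk adj V p \<and> hd p = u \<and> last p = v"
  unfolding shortest_path_def by simp

lemma mid_decomp:
  assumes "x \<in> set p" "x \<noteq> hd p" "x \<noteq> last p"
  shows "\<exists>xs w1 w2 ys. p = xs @ w1 # x # w2 # ys"
proof -
  obtain l1 l2 where p: "p = l1 @ x # l2" using assms(1) by (meson split_list)
  have "l1 \<noteq> []" using assms(2) p by auto
  moreover have "l2 \<noteq> []" using assms(3) p by auto
  ultimately obtain xs w1 w2 ys where "l1 = xs @ [w1]" "l2 = w2 # ys"
    by (metis list.exhaust rev_exhaust)
  then show ?thesis using p by auto
qed


definition rep :: "'a set set \<Rightarrow> 'a set \<Rightarrow> 'a \<Rightarrow> 'a \<Rightarrow> 'a \<Rightarrow> 'a set \<Rightarrow> 'a set" where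
  "rep E V a b c s = (if s \<in> Eprime V b c then
      (if \<exists>y w. y \<in> s \<and> y \<in> V \<and> {y,w} \<in> E then
        (let pr = SOME pr. fst pr \<in> s \<and> fst pr \<in> V \<and> {fst pr, snd pr} \<in> E in {fst pr, snd pr})
       else {a,b}) else s)"

context
  fixes V :: "'a set" and E :: "'a set set" and a b c d :: 'a
  assumes sg: "simple_graph V E"
    and tf: "triangle_free E"
    and aV: "a \<notin> V" and bV: "b \<notin> V" and cV: "c \<notin> V" and dV: "d \<notin> V"
    and dist: "distinct [a, b, c, d]"
begin

lemma Ecases: "e \<in> E \<Longrightarrow> \<exists>y z. e = {y,z} \<and> y \<in> V \<and> z \<in> V \<and> y \<noteq> z"
  using sg unfolding simple_graph_def by blast

lemma Hcases: "e \<in> HG_edges E V a b c d \<Longrightarrow>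
  e \<in> E \<or> e = {a,b} \<or> e = {c,d} \<or> (\<exists>v\<in>V. e = {b,v}) \<or> (\<exists>v\<in>V. e = {c,v})"
  unfolding HG_edges_def Eprime_def by blast

lemma Eprime_cases: "e \<in> Eprime V b c \<Longrightarrow> (\<exists>v\<in>V. e = {b,v}) \<or> (\<exists>v\<in>V. e = {c,v})"
  unfolding Eprime_def by blast

lemma E_sub_V: "e \<in> E \<Longrightarrow> e \<subseteq> V"
  using Ecases by blast

lemma E_Eprime: "e \<in> E \<Longrightarrow> e \<notin> Eprime V b c"
  using E_sub_V bV cV unfolding Eprime_def by blast

lemma ab_notEp: "{a,b} \<notin> Eprime V b c" and cd_notEp: "{c,d} \<notin> Eprime V b c"
  using aV bV cV dV dist unfolding Eprime_def by (auto simp: doubleton_eq_iff)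

lemma finH: "finite (HG_edges E V a b c d)"
proof -
  have "finite V" using sg simple_graph_def by blast
  then have "finite E" using E_sub_V by (meson Pow_iff finite_Pow_iff rev_finite_subset subsetI)
  moreover have "Eprime V b c = (\<lambda>v. {b,v}) ` V \<union> (\<lambda>v. {c,v}) ` V" unfolding Eprime_def by blast
  ultimately show ?thesis using \<open>finite V\<close> unfolding HG_edges_def by simp
qed

lemma ab_in_H: "{a,b} \<in> HG_edges E V a b c d" and cd_in_H: "{c,d} \<in> HG_edges E V a b c d"
  unfolding HG_edges_def by auto

lemma simplicial_ab:
  assumes "geodetic_set line_adj (HG_edges E V a b c d) S"
  shows "{a,b} \<in> S"
proof (rule ccontr)
  assume nS: "{a,b} \<notin> S"
  obtain u v p where uv: "u \<in> S" "v \<in> S" and sp: "shortest_path line_adj (HG_edges E V a b c d) u v p"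
    and ip: "{a,b} \<in> set p"
    using assms ab_in_H unfolding geodetic_set_def by blast
  have hl: "hd p = u" "last p = v" using sp_basic[OF sp] by auto
  have ne: "{a,b} \<noteq> hd p" "{a,b} \<noteq> last p" using uv nS hl by auto
  obtain xs w1 w2 ys where p: "p = xs @ w1 # {a,b} # w2 # ys" using mid_decomp[OF ip ne] by blast
  have ns: "w1 \<noteq> w2 \<and> \<not> line_adj w1 w2" using sp_no_shortcut sp unfolding p by fast
  have w: "walk line_adj (HG_edges E V a b c d) p" using sp_basic[OF sp] by blast
  then have "successively line_adj (w1 # {a,b} # w2 # ys)" "w1 \<in> HG_edges E V a b c d"
    "w2 \<in> HG_edges E V a b c d"
    unfolding walk_alt p by (auto simp: successively_append_iff)
  then have h: "line_adj w1 {a,b}" "line_adj {a,b} w2" "w1 \<in> HG_edges E V a b c d"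
    "w2 \<in> HG_edges E V a b c d" by auto
  have key: "b \<in> w" if "w \<in> HG_edges E V a b c d" "line_adj w {a,b}" for w
  proof -
    have ne: "w \<noteq> {a,b}" "w \<inter> {a,b} \<noteq> {}" using that(2) unfolding line_adj_def by auto
    show ?thesis using Hcases[OF that(1)]
    proof (elim disjE)
      assume "w \<in> E" then show ?thesis using E_sub_V aV bV ne(2) by blast
    next
      assume "w = {c,d}" then show ?thesis using dist ne(2) by auto
    next
      assume "\<exists>v\<in>V. w = {c,v}" then show ?thesis using dist ne(2) aV bV by auto
    qed (use ne in auto)
  qed
  have "b \<in> w1" "b \<in> w2" using key h line_adj_sym by blast+
  then show False using ns unfolding line_adj_def by auto
qed

lemma simplicial_cd:
  assumes "geodetic_set line_adj (HG_edges E V a b c d) S"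
  shows "{c,d} \<in> S"
proof (rule ccontr)
  assume nS: "{c,d} \<notin> S"
  obtain u v p where uv: "u \<in> S" "v \<in> S" and sp: "shortest_path line_adj (HG_edges E V a b c d) u v p"
    and ip: "{c,d} \<in> set p"
    using assms cd_in_H unfolding geodetic_set_def by blast
  have hl: "hd p = u" "last p = v" using sp_basic[OF sp] by auto
  have ne: "{c,d} \<noteq> hd p" "{c,d} \<noteq> last p" using uv nS hl by auto
  obtain xs w1 w2 ys where p: "p = xs @ w1 # {c,d} # w2 # ys" using mid_decomp[OF ip ne] by blast
  have ns: "w1 \<noteq> w2 \<and> \<not> line_adj w1 w2" using sp_no_shortcut sp unfolding p by fast
  have w: "walk line_adj (HG_edges E V a b c d) p" using sp_basic[OF sp] by blast
  then have "successively line_adj (w1 # {c,d} # w2 # ys)" "w1 \<in> HG_edges E V a b c d"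
    "w2 \<in> HG_edges E V a b c d"
    unfolding walk_alt p by (auto simp: successively_append_iff)
  then have h: "line_adj w1 {c,d}" "line_adj {c,d} w2" "w1 \<in> HG_edges E V a b c d"
    "w2 \<in> HG_edges E V a b c d" by auto
  have key: "c \<in> w" if "w \<in> HG_edges E V a b c d" "line_adj w {c,d}" for w
  proof -
    have ne: "w \<noteq> {c,d}" "w \<inter> {c,d} \<noteq> {}" using that(2) unfolding line_adj_def by auto
    show ?thesis using Hcases[OF that(1)]
    proof (elim disjE)
      assume "w \<in> E" then show ?thesis using E_sub_V cV dV ne(2) by blast
    next
      assume "w = {a,b}" then show ?thesis using dist ne(2) by auto
    next
      assume "\<exists>v\<in>V. w = {b,v}" then show ?thesis using dist ne(2) cV dV by auto
    qed (use ne in auto)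
  qed
  have "c \<in> w1" "c \<in> w2" using key h line_adj_sym by blast+
  then show False using ns unfolding line_adj_def by auto
qed


lemma key_ab: "w \<in> HG_edges E V a b c d \<Longrightarrow> line_adj w {a,b} \<Longrightarrow> b \<in> w"
proof -
  assume h: "w \<in> HG_edges E V a b c d" "line_adj w {a,b}"
  have ne: "w \<noteq> {a,b}" "w \<inter> {a,b} \<noteq> {}" using h(2) unfolding line_adj_def by auto
  show ?thesis using Hcases[OF h(1)]
  proof (elim disjE)
    assume "w \<in> E" then show ?thesis using E_sub_V aV bV ne(2) by blast
  next
    assume "w = {c,d}" then show ?thesis using dist ne(2) by auto
  next
    assume "\<exists>v\<in>V. w = {c,v}" then show ?thesis using dist ne(2) aV bV by auto
  qed (use ne in auto)
qed

lemma key_cd: "w \<in> HG_edges E V a b c d \<Longrightarrow> line_adj w {c,d} \<Longrightarrow> c \<in> w"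
proof -
  assume h: "w \<in> HG_edges E V a b c d" "line_adj w {c,d}"
  have ne: "w \<noteq> {c,d}" "w \<inter> {c,d} \<noteq> {}" using h(2) unfolding line_adj_def by auto
  show ?thesis using Hcases[OF h(1)]
  proof (elim disjE)
    assume "w \<in> E" then show ?thesis using E_sub_V cV dV ne(2) by blast
  next
    assume "w = {a,b}" then show ?thesis using dist ne(2) by auto
  next
    assume "\<exists>v\<in>V. w = {b,v}" then show ?thesis using dist ne(2) cV dV by auto
  qed (use ne in auto)
qed

lemma no_bc: "w \<in> HG_edges E V a b c d \<Longrightarrow> b \<in> w \<Longrightarrow> c \<in> w \<Longrightarrow> False"
  using Hcases[of w] E_sub_V bV cV dist by auto

lemma ladjI: "e \<noteq> f \<Longrightarrow> x \<in> e \<Longrightarrow> x \<in> f \<Longrightarrow> line_adj e f"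
  unfolding line_adj_def by blast

lemma Ep_in_H: "e \<in> Eprime V b c \<Longrightarrow> e \<in> HG_edges E V a b c d"
  unfolding HG_edges_def by blast

lemma bv_in: "v \<in> V \<Longrightarrow> {b,v} \<in> HG_edges E V a b c d"
  and cv_in: "v \<in> V \<Longrightarrow> {c,v} \<in> HG_edges E V a b c d"
  unfolding HG_edges_def Eprime_def by blast+

lemma path_abcd:
  assumes v: "v \<in> V"
  shows "shortest_path line_adj (HG_edges E V a b c d) {a,b} {c,d} [{a,b},{b,v},{c,v},{c,d}]"
  unfolding shortest_path_def
proof (intro conjI allI impI)
  have n1: "{a,b} \<noteq> {b,v}" using aV v by (metis insertI1 insert_commute insert_absorb2 doubleton_eq_iff)
  have n2: "{b,v} \<noteq> {c,v}" using dist by (auto simp: doubleton_eq_iff)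
  have n3: "{c,v} \<noteq> {c,d}" using dV v by (auto simp: doubleton_eq_iff)
  show "walk line_adj (HG_edges E V a b c d) [{a,b},{b,v},{c,v},{c,d}]"
    unfolding walk_alt using ab_in_H cd_in_H bv_in[OF v] cv_in[OF v]
      ladjI[OF n1, of b] ladjI[OF n2, of v] ladjI[OF n3, of c] by simp
next
  fix q assume q: "walk line_adj (HG_edges E V a b c d) q \<and> hd q = {a, b} \<and> last q = {c, d}"
  show "length [{a,b},{b,v},{c,v},{c,d}] \<le> length q"
  proof (rule ccontr)
    assume "\<not> ?thesis"
    then have "length q \<le> 3" by simp
    moreover have "q \<noteq> []" using q by (simp add: walk_def)
    ultimately obtain w1 w2 w3 where "q = [w1] \<or> q = [w1,w2] \<or> q = [w1,w2,w3]"
      by (cases q; cases "tl q"; cases "tl (tl q)"; auto)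
    moreover have dj: "{a,b} \<inter> {c,d} = {}" using dist by auto
    ultimately consider "q = [{a,b}]" "{a,b} = {c,d}" | "line_adj {a,b} {c,d}"
       | m where "m \<in> HG_edges E V a b c d" "line_adj {a,b} m" "line_adj m {c,d}"
      using q by (auto simp: walk_alt)
    then show False
    proof cases
      case 1 then show ?thesis using dj by auto
    next
      case 2 then show ?thesis using dj unfolding line_adj_def by auto
    next
      case 3
      then have "b \<in> m" "c \<in> m" using key_ab key_cd line_adj_sym by blast+
      then show ?thesis using no_bc 3(1) by blast
    qed
  qed
qed simp_all

lemma ladjI2: "z \<in> e \<Longrightarrow> z \<notin> f \<Longrightarrow> x \<in> e \<Longrightarrow> x \<in> f \<Longrightarrow> line_adj e f"
  unfolding line_adj_def by blast

lemma mid_exists: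
  assumes s: "s \<in> Eprime V b c" and t: "t \<in> HG_edges E V a b c d"
    and ne: "s \<noteq> t" and na: "\<not> line_adj s t"
  shows "\<exists>m\<in>HG_edges E V a b c d. line_adj s m \<and> line_adj m t"
proof -
  have dj: "s \<inter> t = {}" using ne na unfolding line_adj_def by blast
  have bc: "b \<noteq> c" using dist by auto
  from Eprime_cases[OF s] obtain y x where y: "y \<in> V" and sy: "s = {x,y}" and x: "x = b \<or> x = c" by blast
  have xy: "x \<noteq> y" using x y bV cV by blast
  from Hcases[OF t] show ?thesis
  proof (elim disjE)
    assume tE: "t \<in> E"
    then obtain p q where tp: "t = {p,q}" "p \<in> V" using Ecases by blast
    have m: "{x,p} \<in> HG_edges E V a b c d" using x bv_in cv_in tp(2) by blast
    have pn: "p \<notin> s" using dj tp by blast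
    have xt: "x \<notin> t" using E_sub_V[OF tE] x bV cV by blast
    have "line_adj s {x,p}" by (rule ladjI2[of y _ _ x]) (use sy pn xy in auto)
    moreover have "line_adj {x,p} t" by (rule ladjI2[of x _ _ p]) (use tp xt in auto)
    ultimately show ?thesis using m by blast
  next
    assume ta: "t = {a,b}"
    then have xc: "x = c" using x dj sy by auto
    have m: "{b,y} \<in> HG_edges E V a b c d" using bv_in y by blast
    have "line_adj s {b,y}" by (rule ladjI2[of c _ _ y]) (use sy xc bc cV y in auto)
    moreover have "line_adj {b,y} t" by (rule ladjI2[of y _ _ b]) (use ta aV bV y in auto)
    ultimately show ?thesis using m by blast
  next
    assume ta: "t = {c,d}"
    then have xc: "x = b" using x dj sy by auto
    have m: "{c,y} \<in> HG_edges E V a b c d" using cv_in y by blast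
    have "line_adj s {c,y}" by (rule ladjI2[of b _ _ y]) (use sy xc bc bV y in auto)
    moreover have "line_adj {c,y} t" by (rule ladjI2[of y _ _ c]) (use ta cV dV y in auto)
    ultimately show ?thesis using m by blast
  next
    assume "\<exists>v\<in>V. t = {b,v}"
    then obtain v where v: "v \<in> V" "t = {b,v}" by blast
    then have xc: "x = c" using x dj sy by auto
    have m: "{c,v} \<in> HG_edges E V a b c d" using cv_in v by blast
    have vs: "v \<notin> s" using dj v by auto
    have "line_adj s {c,v}" by (rule ladjI2[of y _ _ c]) (use sy xc vs cV y in auto)
    moreover have "line_adj {c,v} t" by (rule ladjI2[of c _ _ v]) (use v bc cV in auto)
    ultimately show ?thesis using m by blast
  next
    assume "\<exists>v\<in>V. t = {c,v}"
    then obtain v where v: "v \<in> V" "t = {c,v}" by blast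
    then have xc: "x = b" using x dj sy by auto
    have m: "{b,v} \<in> HG_edges E V a b c d" using bv_in v by blast
    have vs: "v \<notin> s" using dj v by auto
    have "line_adj s {b,v}" by (rule ladjI2[of y _ _ b]) (use sy xc vs bV y in auto)
    moreover have "line_adj {b,v} t" by (rule ladjI2[of b _ _ v]) (use v bc bV in auto)
    ultimately show ?thesis using m by blast
  qed
qed

lemma rep_notEp: "s \<notin> Eprime V b c \<Longrightarrow> rep E V a b c s = s"
  unfolding rep_def by simp

lemma rep_Ep:
  assumes s: "s \<in> Eprime V b c"
  shows "rep E V a b c s \<in> E \<or> rep E V a b c s = {a,b}"
proof (cases "\<exists>y w. y \<in> s \<and> y \<in> V \<and> {y,w} \<in> E")
  case True
  let ?P = "\<lambda>pr. fst pr \<in> s \<and> fst pr \<in> V \<and> {fst pr, snd pr} \<in> E"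
  from True obtain y w where "?P (y,w)" by auto
  then have "?P (SOME pr. ?P pr)" by (rule someI)
  moreover have "rep E V a b c s = {fst (SOME pr. ?P pr), snd (SOME pr. ?P pr)}"
    unfolding rep_def if_P[OF s] if_P[OF True] Let_def by simp
  ultimately show ?thesis by simp
next
  case False
  then show ?thesis unfolding rep_def if_P[OF s] if_not_P[OF False] by simp
qed

lemma rep_in: "s \<in> HG_edges E V a b c d \<Longrightarrow> rep E V a b c s \<in> HG_edges E V a b c d \<and> rep E V a b c s \<notin> Eprime V b c"
proof (cases "s \<in> Eprime V b c")
  case True
  have "rep E V a b c s \<in> E \<Longrightarrow> rep E V a b c s \<in> HG_edges E V a b c d" unfolding HG_edges_def by blast
  then show ?thesis using rep_Ep[OF True] E_Eprime ab_notEp ab_in_H by auto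
next
  case False
  then show "s \<in> HG_edges E V a b c d \<Longrightarrow> ?thesis" using rep_notEp by simp
qed

lemma rep_local:
  assumes sH: "s \<in> HG_edges E V a b c d" and xE: "x \<in> E" and yx: "y \<in> x" and zx: "z \<in> x"
    and yz: "y \<noteq> z" and ys: "y \<in> s" and zs: "z \<notin> s"
  shows "rep E V a b c s = x \<or> (rep E V a b c s \<in> E \<and> y \<in> rep E V a b c s \<and> z \<notin> rep E V a b c s)"
proof -
  obtain p q where pq: "x = {p,q}" "p \<in> V" "q \<in> V" using Ecases[OF xE] by blast
  have xyz: "x = {y,z}" using pq yx zx yz by auto
  have yV: "y \<in> V" using pq yx by auto
  show ?thesis
  proof (cases "s \<in> Eprime V b c")
    case True
    from Eprime_cases[OF True] obtain v u where sv: "s = {u,v}" "v \<in> V" "u = b \<or> u = c" by blast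
    have sV: "\<And>t. t \<in> s \<Longrightarrow> t \<in> V \<Longrightarrow> t = v" using sv bV cV by auto
    let ?P = "\<lambda>pr. fst pr \<in> s \<and> fst pr \<in> V \<and> {fst pr, snd pr} \<in> E"
    have ex: "\<exists>y w. y \<in> s \<and> y \<in> V \<and> {y,w} \<in> E" using ys yV xE xyz by blast
    have "?P (y,z)" using ys yV xE xyz by simp
    then have P: "?P (SOME pr. ?P pr)" by (rule someI)
    have r: "rep E V a b c s = {fst (SOME pr. ?P pr), snd (SOME pr. ?P pr)}"
      unfolding rep_def if_P[OF True] if_P[OF ex] Let_def by simp
    have f1: "fst (SOME pr. ?P pr) = v" using P sV by blast
    have "y = v" using sV ys yV by blast
    then have f: "fst (SOME pr. ?P pr) = y" using f1 by simp
    show ?thesis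
    proof (cases "snd (SOME pr. ?P pr) = z")
      case True then show ?thesis using r f xyz by simp
    next
      case False then show ?thesis using r f P yz by auto
    qed
  next
    case False
    have "s \<in> E"
      using Hcases[OF sH]
    proof (elim disjE)
      assume "s = {a,b}" then show ?thesis using ys yV aV bV by auto
    next
      assume "s = {c,d}" then show ?thesis using ys yV cV dV by auto
    next
      assume "\<exists>v\<in>V. s = {b,v}" then show ?thesis using False unfolding Eprime_def by blast
    next
      assume "\<exists>v\<in>V. s = {c,v}" then show ?thesis using False unfolding Eprime_def by blast
    qed
    then show ?thesis using rep_notEp[OF False] ys zs by simp
  qed
qed


lemma main_aux:
  "\<exists>Q. line_geodetic_set (HG_edges E V a b c d) Q \<and>
           (\<forall>S. line_geodetic_set (HG_edges E V a b c d) S \<longrightarrow> card Q \<le> card S) \<and>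
           Q \<inter> Eprime V b c = {}"
proof -
  let ?H = "HG_edges E V a b c d"
  have "geodetic_set line_adj ?H ?H"
    unfolding geodetic_set_def
  proof (intro conjI ballI subset_refl)
    fix x assume "x \<in> ?H"
    then have "shortest_path line_adj ?H x x [x]" by (rule sp_single)
    then show "\<exists>u\<in>?H. \<exists>v\<in>?H. \<exists>p. shortest_path line_adj ?H u v p \<and> x \<in> set p"
      using \<open>x \<in> ?H\<close> by force
  qed
  then obtain S where geoS: "geodetic_set line_adj ?H S"
    and minS: "\<And>S'. geodetic_set line_adj ?H S' \<Longrightarrow> card S \<le> card S'"
    using ex_has_least_nat[of "geodetic_set line_adj ?H" ?H card] by auto
  have SH: "S \<subseteq> ?H" using geoS unfolding geodetic_set_def by (rule conjunct1)
  have finS: "finite S" using SH finH finite_subset by blast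
  have abS: "{a,b} \<in> S" using simplicial_ab[OF geoS] .
  have cdS: "{c,d} \<in> S" using simplicial_cd[OF geoS] .
  define Q where "Q = rep E V a b c ` S"
  have abQ: "{a,b} \<in> Q" unfolding Q_def using abS rep_notEp[OF ab_notEp] by (metis image_eqI)
  have cdQ: "{c,d} \<in> Q" unfolding Q_def using cdS rep_notEp[OF cd_notEp] by (metis image_eqI)
  have QH: "Q \<subseteq> ?H" unfolding Q_def using SH rep_in by auto
  have Qdj: "Q \<inter> Eprime V b c = {}" unfolding Q_def using SH rep_in by auto
  have cardQ: "card Q \<le> card S" unfolding Q_def using finS by (rule card_image_le)
  have cover: "\<exists>u\<in>Q. \<exists>v\<in>Q. \<exists>p. shortest_path line_adj ?H u v p \<and> x \<in> set p" if xH: "x \<in> ?H" for x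
  proof (cases "x \<in> Q")
    case True then show ?thesis using sp_single[of x ?H line_adj] xH by force
  next
    case xQ: False
    from Hcases[OF xH] show ?thesis
    proof (elim disjE)
      assume "\<exists>v\<in>V. x = {b,v}"
      then obtain v where v: "v \<in> V" "x = {b,v}" by blast
      show ?thesis using path_abcd[OF v(1)] abQ cdQ v(2) by force
    next
      assume "\<exists>v\<in>V. x = {c,v}"
      then obtain v where v: "v \<in> V" "x = {c,v}" by blast
      show ?thesis using path_abcd[OF v(1)] abQ cdQ v(2) by force
    next
      assume "x = {a,b}" then show ?thesis using abQ xQ by simp
    next
      assume "x = {c,d}" then show ?thesis using cdQ xQ by simp
    next
      assume xE: "x \<in> E"
      have xnEp: "x \<notin> Eprime V b c" using E_Eprime[OF xE] .
      have xS: "x \<notin> S"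
      proof
        assume "x \<in> S" then have "rep E V a b c x \<in> Q" unfolding Q_def by blast
        then show False using xQ rep_notEp[OF xnEp] by simp
      qed
      obtain u v p where uv: "u \<in> S" "v \<in> S" and sp: "shortest_path line_adj ?H u v p"
        and xp: "x \<in> set p" using geoS xH unfolding geodetic_set_def by blast
      have pb: "walk line_adj ?H p" "hd p = u" "last p = v" using sp_basic[OF sp] by auto
      show ?thesis
      proof (cases "u \<in> Eprime V b c \<or> v \<in> Eprime V b c")
        case False
        then have "rep E V a b c u = u" "rep E V a b c v = v" using rep_notEp by auto
        then have "u \<in> Q" "v \<in> Q" unfolding Q_def using uv by force+
        then show ?thesis using sp xp by blast
      next
        case True
        have uH: "u \<in> ?H" "v \<in> ?H" using uv SH by auto
        have "\<exists>q. walk line_adj ?H q \<and> hd q = u \<and> last q = v \<and> length q \<le> 3"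
        proof (cases "u = v")
          case True then show ?thesis using uH by (intro exI[of _ "[u]"]) (auto simp: walk_alt)
        next
          case ne: False
          show ?thesis
          proof (cases "line_adj u v")
            case True then show ?thesis using uH by (intro exI[of _ "[u,v]"]) (auto simp: walk_alt)
          next
            case na: False
            have "\<exists>m\<in>?H. line_adj u m \<and> line_adj m v"
            proof (cases "u \<in> Eprime V b c")
              case True then show ?thesis using mid_exists uH ne na by blast
            next
              case False
              then have "v \<in> Eprime V b c" using \<open>u \<in> Eprime V b c \<or> v \<in> Eprime V b c\<close> by blast
              then have "\<exists>m\<in>?H. line_adj v m \<and> line_adj m u"
                using mid_exists[of v u] uH ne na line_adj_sym[of v u] by auto
              then show ?thesis using line_adj_sym by blast
            qed
            then obtain m where "m \<in> ?H" "line_adj u m" "line_adj m v" by blast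
            then show ?thesis using uH by (intro exI[of _ "[u,m,v]"]) (auto simp: walk_alt)
          qed
        qed
        then obtain q where q: "walk line_adj ?H q" "hd q = u" "last q = v" "length q \<le> 3" by blast
        have "length p \<le> length q" using sp q(1-3) unfolding shortest_path_def by blast
        then have lp: "length p \<le> 3" using q(4) by linarith
        have ne: "x \<noteq> hd p" "x \<noteq> last p" using pb uv xS by auto
        obtain xs w1 w2 ys where p: "p = xs @ w1 # x # w2 # ys" using mid_decomp[OF xp ne] by blast
        then have "xs = []" "ys = []" using lp by auto
        then have p3: "p = [u,x,v]" using p pb by simp
        have nsc: "u \<noteq> v \<and> \<not> line_adj u v" using sp_no_shortcut[of line_adj ?H u v "[]" u x v "[]"] sp p3 by simp
        have adj: "line_adj u x" "line_adj x v" using pb(1) p3 by (auto simp: walk_alt)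
        obtain y0 where y0: "y0 \<in> u" "y0 \<in> x" using adj(1) unfolding line_adj_def by blast
        obtain z0 where z0: "z0 \<in> v" "z0 \<in> x" using adj(2) unfolding line_adj_def by blast
        have uvd: "u \<inter> v = {}" using nsc unfolding line_adj_def by blast
        have yz: "y0 \<noteq> z0" "y0 \<notin> v" "z0 \<notin> u" using y0 z0 uvd by auto
        have ru: "rep E V a b c u = x \<or> (rep E V a b c u \<in> E \<and> y0 \<in> rep E V a b c u \<and> z0 \<notin> rep E V a b c u)"
          using rep_local[OF uH(1) xE y0(2) z0(2) yz(1) y0(1) yz(3)] .
        have rv: "rep E V a b c v = x \<or> (rep E V a b c v \<in> E \<and> z0 \<in> rep E V a b c v \<and> y0 \<notin> rep E V a b c v)"
          using rep_local[OF uH(2) xE z0(2) y0(2) _ z0(1) yz(2)] yz(1) by metis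
        have ruQ0: "rep E V a b c u \<in> Q" "rep E V a b c v \<in> Q" unfolding Q_def using uv by auto
        then have ru': "rep E V a b c u \<in> E" "y0 \<in> rep E V a b c u" "z0 \<notin> rep E V a b c u"
          and rv': "rep E V a b c v \<in> E" "z0 \<in> rep E V a b c v" "y0 \<notin> rep E V a b c v"
          using ru rv xQ ruQ0 by auto
        have ruQ: "rep E V a b c u \<in> Q" "rep E V a b c v \<in> Q" using ruQ0 .
        obtain p1 q1 where "rep E V a b c u = {p1,q1}" using Ecases[OF ru'(1)] by blast
        then have u': "rep E V a b c u = {y0, if y0 = p1 then q1 else p1}" using ru'(2) by auto
        obtain p2 q2 where "rep E V a b c v = {p2,q2}" using Ecases[OF rv'(1)] by blast
        then have v': "rep E V a b c v = {z0, if z0 = p2 then q2 else p2}" using rv'(2) by auto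
        define u'' where "u'' = (if y0 = p1 then q1 else p1)"
        define v'' where "v'' = (if z0 = p2 then q2 else p2)"
        have u': "rep E V a b c u = {y0,u''}" using u' u''_def by simp
        have v': "rep E V a b c v = {z0,v''}" using v' v''_def by simp
        have xyz: "x = {y0,z0}" using Ecases[OF xE] y0(2) z0(2) yz(1) by auto
        have "u'' \<noteq> v''"
        proof
          assume uv'': "u'' = v''"
          have e1: "{y0,u''} \<in> E" using ru'(1) u' by simp
          have e2: "{u'',z0} \<in> E" using rv'(1) v' uv'' by (simp add: insert_commute)
          have e3: "{y0,z0} \<in> E" using xE xyz by simp
          from e1 e2 e3 have "{y0,u''} \<in> E \<and> {u'',z0} \<in> E \<and> {y0,z0} \<in> E" by blast
          then show False using tf unfolding triangle_free_def by blast
        qed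
        then have dj: "rep E V a b c u \<inter> rep E V a b c v = {}"
          using u' v' yz(1) ru'(3) rv'(3) \<open>u'' \<noteq> v''\<close> by auto
        have h1: "rep E V a b c u \<noteq> rep E V a b c v" using dj ru'(2) by auto
        have "shortest_path line_adj ?H (rep E V a b c u) (rep E V a b c v)
                [rep E V a b c u, x, rep E V a b c v]"
        proof (rule sp_three)
          show "walk line_adj ?H [rep E V a b c u, x, rep E V a b c v]"
          proof -
            have n1: "rep E V a b c u \<noteq> x" "x \<noteq> rep E V a b c v" using ruQ xQ by auto
            have "line_adj (rep E V a b c u) x" using ladjI[OF n1(1) ru'(2) y0(2)] .
            moreover have "line_adj x (rep E V a b c v)" using ladjI[OF n1(2) z0(2) rv'(2)] .
            moreover have "rep E V a b c u \<in> ?H" "rep E V a b c v \<in> ?H" using ruQ QH by auto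
            ultimately show ?thesis unfolding walk_alt using xH by simp
          qed
          show "rep E V a b c u \<noteq> rep E V a b c v" by fact
          show "\<not> line_adj (rep E V a b c u) (rep E V a b c v)" using dj unfolding line_adj_def by blast
        qed
        then show ?thesis using ruQ by force
      qed
    qed
  qed
  have geoQ: "geodetic_set line_adj ?H Q" unfolding geodetic_set_def using QH cover by blast
  have "\<forall>S'. geodetic_set line_adj ?H S' \<longrightarrow> card Q \<le> card S'"
    using cardQ minS le_trans by blast
  then show ?thesis unfolding line_geodetic_set_def using geoQ Qdj by blast
qed

end

theorem mainTheorem7:
  fixes V :: "'a set" and E :: "'a set set" and a b c d :: 'a
  assumes "simple_graph V E"
    and "triangle_free E"
    and "a \<notin> V" and "b \<notin> V" and "c \<notin> V" and "d \<notin> V"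
    and "distinct [a, b, c, d]"
  shows "\<exists>Q. line_geodetic_set (HG_edges E V a b c d) Q \<and>
           (\<forall>S. line_geodetic_set (HG_edges E V a b c d) S \<longrightarrow> card Q \<le> card S) \<and>
           Q \<inter> Eprime V b c = {}"
  using main_aux[OF assms] .

end
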